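(* Let $\mathcal P$ be a conventional logic program. Then: (1) if $v$ is a three-valued stable model of $\mathcal P$, then $v$ is a pessimistic fixed model of $\mathcal P$, i.e. $\Psi'^{\mathcal F}_{\mathcal P}(v)=v$; (2) if $v$ is the well-founded semantics of $\mathcal P$, then $v=Fix^{\mathcal F}_{\mathcal U}$; (3) if $v$ is the Kripke-Kleene semantics of $\mathcal P$, then $v=Fix^{\mathcal U}_{\mathcal U}$.
   Context: $\mathcal{FOUR}=\{\mathcal F,\mathcal T,\mathcal U,\mathcal I\}$ is Belnap's bilattice: truth order $\mathcal F\le_t\mathcal U\le_t\mathcal T$, $\mathcal F\le_t\mathcal I\le_t\mathcal T$; knowledge order $\mathcal U\le_k\mathcal F\le_k\mathcal I$, $\mathcal U\le_k\mathcal T\le_k\mathcal I$; $\wedge,\vee$ are meet/join for $\le_t$, $\otimes,\oplus$ for $\le_k$ (with infinitary versions $\bigwedge,\bigvee,\bigotimes,\bigoplus$); negation $\neg\mathcal T=\mathcal F$, $\neg\mathcal F=\mathcal T$, $\neg\mathcal U=\mathcal U$, $\neg\mathcal I=\mathcal I$. A Fitting program over $\mathcal{FOUR}$: formulas are built from literals ($A$ or $\neg A$) and elements of $\mathcal{FOUR}$ using $\wedge,\vee,\otimes,\oplus,\exists,\forall$ (with built-in predicate $equal$); a clause is $P(x_1,\dots,x_n)\leftarrow\phi(x_1,\dots,x_n)$ with the body's free variables among $x_1,\dots,x_n$; a program is a finite set of clauses with no predicate letter heading more than one clause; Inst-$\mathcal P$ is its set of ground instances. A conventional logic program is such a program that does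 not involve $\otimes,\oplus,\forall,\mathcal U,\mathcal I$. Valuations are maps from ground atoms to $\mathcal{FOUR}$, ordered pointwise; they extend to closed formulas compositionally ($v(\beta)=\beta$, $v(\neg A)=\neg v(A)$, connectives pointwise, $\exists$ as $\bigvee$, $\forall$ as $\bigwedge$ over closed-term instances, $v(equal(s,t))=\mathcal T$ if $s=t$ else $\mathcal F$). The contrajoin $v\bigtriangleup w$ evaluates likewise but gives $A$ the value $v(A)$ and $\neg A$ the value $\neg w(A)$. For $\alpha\in\mathcal{FOUR}$: $\Psi_{\mathcal P}^{\alpha}(v,w)(A)=\alpha$ if $A$ heads no member of Inst-$\mathcal P$, and $=(v\bigtriangleup w)(B)$ if $A\leftarrow B\in$ Inst-$\mathcal P$. $\Psi'^{\mathcal F}_{\mathcal P}(v)$ is the $\le_t$-least fixpoint of $x\mapsto\Psi^{\mathcal F}_{\mathcal P}(x,v)$ and $\Psi'^{\mathcal U}_{\mathcal P}(v)$ is the $\le_k$-least fixpoint of $x\mapsto\Psi^{\mathcal U}_{\mathcal P}(x,v)$. A pessimistic fixed model is a fixpoint of $\Psi'^{\mathcal F}_{\mathcal P}$. $Fix^{\alpha}_{\mathcal U}$ is the $\le_k$-least fixpoint of $\Psi'^{\alpha}_{\mathcal P}$. Three-valued stable models (Przymusinski): for a valuation $v$ with values in $\{\mathcal F,\mathcal U,\mathcal T\}$, let $\mathcal P_{/v}$ be obtained from Inst-$\mathcal P$ by replacing each negative literal $\neg A$ in bodies by the value $\neg v(A)$; let $\Phi_{\mathcal P_{/v}}(u)(A)=\mathcal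 F$ if $A$ heads no rule of $\mathcal P_{/v}$, $\mathcal T$ if $A\leftarrow$ (empty body) is in $\mathcal P_{/v}$, and otherwise the join over rules $A\leftarrow B$ of $\mathcal P_{/v}$ of $u(B)$; $GL_{\mathcal P}(v)$ is the $\le_t$-least fixpoint of $\Phi_{\mathcal P_{/v}}$. $v$ is a three-valued stable model if $GL_{\mathcal P}(v)=v$; the well-founded semantics is the least three-valued stable model. Kripke-Kleene semantics (as defined in the paper): $\Phi_{\mathcal P}(v)(A)=\mathcal T$ if some rule of Inst-$\mathcal P$ with head $A$ has body value $\mathcal T$ under $v$; $=\mathcal F$ if there is a rule with head $A$ and every rule with head $A$ has body value $\mathcal F$ under $v$; $=\mathcal U$ otherwise. The Kripke-Kleene semantics is the $\le_k$-least fixpoint of $\Phi_{\mathcal P}$. *)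

theory Defs
  imports Main
begin

section \<open>Belnap's bilattice FOUR\<close>

datatype four = FF | TT | UU | II

definition le_t :: "four \<Rightarrow> four \<Rightarrow> bool" where
  "le_t x y \<longleftrightarrow> x = y \<or> x = FF \<or> y = TT"

definition le_k :: "four \<Rightarrow> four \<Rightarrow> bool" where
  "le_k x y \<longleftrightarrow> x = y \<or> x = UU \<or> y = II"

text \<open>Standard product representation: a value carries evidence for truth and for falsity.\<close>
definition tr :: "four \<Rightarrow> bool" where "tr x \<longleftrightarrow> x = TT \<or> x = II"
definition fa :: "four \<Rightarrow> bool" where "fa x \<longleftrightarrow> x = FF \<or> x = II"
definition mk :: "bool \<Rightarrow> bool \<Rightarrow> four" where
  "mk t f = (if t then (if f then II else TT) else (if f then FF else UU))"

definition neg4 :: "four \<Rightarrow> four" where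
  "neg4 x = (case x of TT \<Rightarrow> FF | FF \<Rightarrow> TT | UU \<Rightarrow> UU | II \<Rightarrow> II)"

definition BigAnd :: "four set \<Rightarrow> four" where
  "BigAnd S = mk (\<forall>x\<in>S. tr x) (\<exists>x\<in>S. fa x)"
definition BigOr :: "four set \<Rightarrow> four" where
  "BigOr S = mk (\<exists>x\<in>S. tr x) (\<forall>x\<in>S. fa x)"
definition BigOtimes :: "four set \<Rightarrow> four" where
  "BigOtimes S = mk (\<forall>x\<in>S. tr x) (\<forall>x\<in>S. fa x)"
definition BigOplus :: "four set \<Rightarrow> four" where
  "BigOplus S = mk (\<exists>x\<in>S. tr x) (\<exists>x\<in>S. fa x)"

definition and4 :: "four \<Rightarrow> four \<Rightarrow> four" where "and4 x y = BigAnd {x, y}"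
definition or4 :: "four \<Rightarrow> four \<Rightarrow> four" where "or4 x y = BigOr {x, y}"
definition otimes4 :: "four \<Rightarrow> four \<Rightarrow> four" where "otimes4 x y = BigOtimes {x, y}"
definition oplus4 :: "four \<Rightarrow> four \<Rightarrow> four" where "oplus4 x y = BigOplus {x, y}"

datatype 'f trm = Var nat | Fn 'f "'f trm list"

datatype 'f gtrm = GFn 'f "'f gtrm list"

fun teval :: "(nat \<Rightarrow> 'f gtrm) \<Rightarrow> 'f trm \<Rightarrow> 'f gtrm" where
  "teval \<sigma> (Var x) = \<sigma> x"
| "teval \<sigma> (Fn f ts) = GFn f (map (teval \<sigma>) ts)"

fun tvars :: "'f trm \<Rightarrow> nat set" where
  "tvars (Var x) = {x}"
| "tvars (Fn f ts) = \<Union> (set (map tvars ts))"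

text \<open>Formulas: literals (with polarity: True = positive, False = negated), the built-in
  equality literal, constants of FOUR, the four binary connectives, and quantifiers.\<close>
datatype ('p, 'f) fm =
    Lit bool 'p "'f trm list"
  | Eq bool "'f trm" "'f trm"
  | Cst four
  | And "('p,'f) fm" "('p,'f) fm"
  | Or "('p,'f) fm" "('p,'f) fm"
  | Otimes "('p,'f) fm" "('p,'f) fm"
  | Oplus "('p,'f) fm" "('p,'f) fm"
  | Ex nat "('p,'f) fm"
  | All nat "('p,'f) fm"

fun fv :: "('p,'f) fm \<Rightarrow> nat set" where
  "fv (Lit b p ts) = \<Union> (set (map tvars ts))"
| "fv (Eq b s t) = tvars s \<union> tvars t"
| "fv (Cst c) = {}"
| "fv (And a b) = fv a \<union> fv b"
| "fv (Or a b) = fv a \<union> fv b"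
| "fv (Otimes a b) = fv a \<union> fv b"
| "fv (Oplus a b) = fv a \<union> fv b"
| "fv (Ex x a) = fv a - {x}"
| "fv (All x a) = fv a - {x}"

fun conventional_fm :: "('p,'f) fm \<Rightarrow> bool" where
  "conventional_fm (Lit b p ts) = True"
| "conventional_fm (Eq b s t) = True"
| "conventional_fm (Cst c) = (c = FF \<or> c = TT)"
| "conventional_fm (And a b) = (conventional_fm a \<and> conventional_fm b)"
| "conventional_fm (Or a b) = (conventional_fm a \<and> conventional_fm b)"
| "conventional_fm (Otimes a b) = False"
| "conventional_fm (Oplus a b) = False"
| "conventional_fm (Ex x a) = conventional_fm a"
| "conventional_fm (All x a) = False"

text \<open>A clause P(x1,...,xn) <- phi is a triple (P, [x1,...,xn], phi).\<close>
type_synonym ('p, 'f) clause = "'p \<times> nat list \<times> ('p,'f) fm"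
type_synonym ('p, 'f) program = "('p,'f) clause set"

definition fitting_program :: "('p,'f) program \<Rightarrow> bool" where
  "fitting_program P \<longleftrightarrow> finite P
     \<and> (\<forall>(p, xs, \<phi>) \<in> P. distinct xs \<and> fv \<phi> \<subseteq> set xs)
     \<and> (\<forall>c1\<in>P. \<forall>c2\<in>P. fst c1 = fst c2 \<longrightarrow> c1 = c2)"

definition conventional_program :: "('p,'f) program \<Rightarrow> bool" where
  "conventional_program P \<longleftrightarrow> fitting_program P \<and> (\<forall>(p, xs, \<phi>) \<in> P. conventional_fm \<phi>)"

type_synonym ('p, 'f) gatom = "'p \<times> 'f gtrm list"
type_synonym ('p, 'f) valuation = "('p,'f) gatom \<Rightarrow> four"

text \<open>Ground instances: the instance of clause (p, xs, phi) under a grounding substitution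
  sigma is the rule with head (p, map sigma xs) and closed body phi sigma, represented by
  the pair (phi, sigma).\<close>
definition inst :: "('p,'f) program \<Rightarrow> (('p,'f) gatom \<times> ('p,'f) fm \<times> (nat \<Rightarrow> 'f gtrm)) set" where
  "inst P = {(A, \<phi>, \<sigma>). \<exists>p xs. (p, xs, \<phi>) \<in> P \<and> A = (p, map \<sigma> xs)}"

text \<open>Evaluation of the closed formula phi sigma, where positive ground literals A get
  value pos A and negative ground literals get value neg A.\<close>
fun evalg :: "('p,'f) valuation \<Rightarrow> ('p,'f) valuation \<Rightarrow> (nat \<Rightarrow> 'f gtrm) \<Rightarrow> ('p,'f) fm \<Rightarrow> four" where
  "evalg pos neg \<sigma> (Lit b p ts) =
     (if b then pos (p, map (teval \<sigma>) ts) else neg (p, map (teval \<sigma>) ts))"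
| "evalg pos neg \<sigma> (Eq b s t) =
     (let e = (if teval \<sigma> s = teval \<sigma> t then TT else FF) in if b then e else neg4 e)"
| "evalg pos neg \<sigma> (Cst c) = c"
| "evalg pos neg \<sigma> (And a b) = and4 (evalg pos neg \<sigma> a) (evalg pos neg \<sigma> b)"
| "evalg pos neg \<sigma> (Or a b) = or4 (evalg pos neg \<sigma> a) (evalg pos neg \<sigma> b)"
| "evalg pos neg \<sigma> (Otimes a b) = otimes4 (evalg pos neg \<sigma> a) (evalg pos neg \<sigma> b)"
| "evalg pos neg \<sigma> (Oplus a b) = oplus4 (evalg pos neg \<sigma> a) (evalg pos neg \<sigma> b)"
| "evalg pos neg \<sigma> (Ex x a) = BigOr {evalg pos neg (\<sigma>(x := t)) a | t. True}"
| "evalg pos neg \<sigma> (All x a) = BigAnd {evalg pos neg (\<sigma>(x := t)) a | t. True}"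

definition val :: "('p,'f) valuation \<Rightarrow> (nat \<Rightarrow> 'f gtrm) \<Rightarrow> ('p,'f) fm \<Rightarrow> four" where
  "val v = evalg v (\<lambda>A. neg4 (v A))"

definition contrajoin :: "('p,'f) valuation \<Rightarrow> ('p,'f) valuation \<Rightarrow> (nat \<Rightarrow> 'f gtrm) \<Rightarrow> ('p,'f) fm \<Rightarrow> four" where
  "contrajoin v w = evalg v (\<lambda>A. neg4 (w A))"

definition le_tv :: "('p,'f) valuation \<Rightarrow> ('p,'f) valuation \<Rightarrow> bool" where
  "le_tv v w \<longleftrightarrow> (\<forall>A. le_t (v A) (w A))"

definition le_kv :: "('p,'f) valuation \<Rightarrow> ('p,'f) valuation \<Rightarrow> bool" where
  "le_kv v w \<longleftrightarrow> (\<forall>A. le_k (v A) (w A))"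

definition is_least_fp :: "('a \<Rightarrow> 'a \<Rightarrow> bool) \<Rightarrow> ('a \<Rightarrow> 'a) \<Rightarrow> 'a \<Rightarrow> bool" where
  "is_least_fp le f x \<longleftrightarrow> f x = x \<and> (\<forall>y. f y = y \<longrightarrow> le x y)"

definition least_fp :: "('a \<Rightarrow> 'a \<Rightarrow> bool) \<Rightarrow> ('a \<Rightarrow> 'a) \<Rightarrow> 'a" where
  "least_fp le f = (THE x. is_least_fp le f x)"

definition Psi :: "('p,'f) program \<Rightarrow> four \<Rightarrow> ('p,'f) valuation \<Rightarrow> ('p,'f) valuation \<Rightarrow> ('p,'f) valuation" where
  "Psi P \<alpha> v w A =
     (if \<exists>\<phi> \<sigma>. (A, \<phi>, \<sigma>) \<in> inst P
      then (THE b. \<exists>\<phi> \<sigma>. (A, \<phi>, \<sigma>) \<in> inst P \<and> b = contrajoin v w \<sigma> \<phi>)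
      else \<alpha>)"

definition PsiF' :: "('p,'f) program \<Rightarrow> ('p,'f) valuation \<Rightarrow> ('p,'f) valuation" where
  "PsiF' P v = least_fp le_tv (\<lambda>x. Psi P FF x v)"

definition PsiU' :: "('p,'f) program \<Rightarrow> ('p,'f) valuation \<Rightarrow> ('p,'f) valuation" where
  "PsiU' P v = least_fp le_kv (\<lambda>x. Psi P UU x v)"

definition pessimistic_fixed_model :: "('p,'f) program \<Rightarrow> ('p,'f) valuation \<Rightarrow> bool" where
  "pessimistic_fixed_model P v \<longleftrightarrow> PsiF' P v = v"

definition FixFU :: "('p,'f) program \<Rightarrow> ('p,'f) valuation" where
  "FixFU P = least_fp le_kv (PsiF' P)"

definition FixUU :: "('p,'f) program \<Rightarrow> ('p,'f) valuation" where
  "FixUU P = least_fp le_kv (PsiU' P)"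

definition three_valued :: "('p,'f) valuation \<Rightarrow> bool" where
  "three_valued v \<longleftrightarrow> (\<forall>A. v A \<noteq> II)"

text \<open>Phi of the reduct P/v applied to u: each negative literal "not A" of a ground body
  is replaced by the constant neg (v A), and the remaining (positive) literals are
  evaluated by u.\<close>
definition Phi_red :: "('p,'f) program \<Rightarrow> ('p,'f) valuation \<Rightarrow> ('p,'f) valuation \<Rightarrow> ('p,'f) valuation" where
  "Phi_red P v u A =
     (if \<exists>\<phi> \<sigma>. (A, \<phi>, \<sigma>) \<in> inst P
      then BigOr {evalg u (\<lambda>B. neg4 (v B)) \<sigma> \<phi> | \<phi> \<sigma>. (A, \<phi>, \<sigma>) \<in> inst P}
      else FF)"

definition GL :: "('p,'f) program \<Rightarrow> ('p,'f) valuation \<Rightarrow> ('p,'f) valuation" where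
  "GL P v = least_fp le_tv (Phi_red P v)"

definition stable3 :: "('p,'f) program \<Rightarrow> ('p,'f) valuation \<Rightarrow> bool" where
  "stable3 P v \<longleftrightarrow> three_valued v \<and> GL P v = v"

definition well_founded_sem :: "('p,'f) program \<Rightarrow> ('p,'f) valuation \<Rightarrow> bool" where
  "well_founded_sem P v \<longleftrightarrow> stable3 P v \<and> (\<forall>w. stable3 P w \<longrightarrow> le_kv v w)"

definition Phi_KK :: "('p,'f) program \<Rightarrow> ('p,'f) valuation \<Rightarrow> ('p,'f) valuation" where
  "Phi_KK P v A =
     (if \<exists>\<phi> \<sigma>. (A, \<phi>, \<sigma>) \<in> inst P \<and> val v \<sigma> \<phi> = TT then TT
      else if (\<exists>\<phi> \<sigma>. (A, \<phi>, \<sigma>) \<in> inst P) \<and> (\<forall>\<phi> \<sigma>. (A, \<phi>, \<sigma>) \<in> inst P \<longrightarrow> val v \<sigma> \<phi> = FF) then FF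
      else UU)"

definition kripke_kleene_sem :: "('p,'f) program \<Rightarrow> ('p,'f) valuation \<Rightarrow> bool" where
  "kripke_kleene_sem P v \<longleftrightarrow> is_least_fp le_kv (Phi_KK P) v"

end

theory Submission
  imports Defs
begin

lemma tr_mk[simp]: "tr (mk a b) = a" by (simp add: tr_def mk_def)
lemma fa_mk[simp]: "fa (mk a b) = b" by (simp add: fa_def mk_def)
lemma mk_tr_fa[simp]: "mk (tr x) (fa x) = x" by (cases x) (simp_all add: tr_def fa_def mk_def)
lemma tr_neg4[simp]: "tr (neg4 x) = fa x" by (cases x) (simp_all add: tr_def fa_def neg4_def)
lemma fa_neg4[simp]: "fa (neg4 x) = tr x" by (cases x) (simp_all add: tr_def fa_def neg4_def)
lemma tr_consts[simp]: "tr TT" "\<not> tr FF" "\<not> tr UU" "tr II" by (simp_all add: tr_def)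
lemma fa_consts[simp]: "\<not> fa TT" "fa FF" "\<not> fa UU" "fa II" by (simp_all add: fa_def)
lemma II_iff: "x = II \<longleftrightarrow> tr x \<and> fa x" by (cases x) (auto simp: tr_def fa_def)
lemma le_t_iff: "le_t x y \<longleftrightarrow> (tr x \<longrightarrow> tr y) \<and> (fa y \<longrightarrow> fa x)"
  by (cases x; cases y) (simp_all add: le_t_def tr_def fa_def)
lemma le_k_iff: "le_k x y \<longleftrightarrow> (tr x \<longrightarrow> tr y) \<and> (fa x \<longrightarrow> fa y)"
  by (cases x; cases y) (simp_all add: le_k_def tr_def fa_def)

lemma tr_BigAnd[simp]: "tr (BigAnd S) = (\<forall>x\<in>S. tr x)" by (simp add: BigAnd_def)
lemma fa_BigAnd[simp]: "fa (BigAnd S) = (\<exists>x\<in>S. fa x)" by (simp add: BigAnd_def)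
lemma tr_BigOr[simp]: "tr (BigOr S) = (\<exists>x\<in>S. tr x)" by (simp add: BigOr_def)
lemma fa_BigOr[simp]: "fa (BigOr S) = (\<forall>x\<in>S. fa x)" by (simp add: BigOr_def)
lemma tr_BigOtimes[simp]: "tr (BigOtimes S) = (\<forall>x\<in>S. tr x)" by (simp add: BigOtimes_def)
lemma fa_BigOtimes[simp]: "fa (BigOtimes S) = (\<forall>x\<in>S. fa x)" by (simp add: BigOtimes_def)
lemma tr_BigOplus[simp]: "tr (BigOplus S) = (\<exists>x\<in>S. tr x)" by (simp add: BigOplus_def)
lemma fa_BigOplus[simp]: "fa (BigOplus S) = (\<exists>x\<in>S. fa x)" by (simp add: BigOplus_def)

lemma le_kv_antisym: "le_kv x y \<Longrightarrow> le_kv y x \<Longrightarrow> x = y"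
  unfolding le_kv_def by (rule ext) (metis le_k_def four.distinct)
lemma le_kv_refl: "le_kv x x" by (simp add: le_kv_def le_k_def)
lemma le_tv_antisym: "le_tv x y \<Longrightarrow> le_tv y x \<Longrightarrow> x = y"
  unfolding le_tv_def by (rule ext) (metis le_t_def four.distinct)
lemma le_tv_refl: "le_tv x x" by (simp add: le_tv_def le_t_def)

section \<open>Generic least fixpoints\<close>

definition has_lfp :: "('a \<Rightarrow> 'a \<Rightarrow> bool) \<Rightarrow> ('a \<Rightarrow> 'a) \<Rightarrow> 'a \<Rightarrow> bool" where
  "has_lfp le f m \<longleftrightarrow> f m = m \<and> (\<forall>y. le (f y) y \<longrightarrow> le m y)"

lemma gen_lfp:
  fixes e :: "'a \<Rightarrow> 'b::complete_lattice"
  assumes le: "\<And>x y. le x y \<longleftrightarrow> e x \<le> e y" and de: "\<And>x. d (e x) = x"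
    and ed: "\<And>g. e (d g) = g" and mono: "\<And>x y. le x y \<Longrightarrow> le (f x) (f y)"
  shows "has_lfp le f (d (lfp (\<lambda>g. e (f (d g)))))"
proof -
  let ?g = "\<lambda>g. e (f (d g))"
  have mg: "mono ?g"
  proof (rule monoI)
    fix a b :: 'b assume "a \<le> b"
    hence "le (d a) (d b)" using le ed by simp
    hence "le (f (d a)) (f (d b))" by (rule mono)
    thus "?g a \<le> ?g b" using le by simp
  qed
  have fp: "?g (lfp ?g) = lfp ?g" using lfp_unfold[OF mg] by simp
  hence "d (?g (lfp ?g)) = d (lfp ?g)" by simp
  hence 1: "f (d (lfp ?g)) = d (lfp ?g)" using de by simp
  have 2: "le (d (lfp ?g)) y" if "le (f y) y" for y
  proof -
    have "?g (e y) \<le> e y" using that le de by simp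
    hence "lfp ?g \<le> e y" by (rule lfp_lowerbound)
    thus ?thesis using le ed by simp
  qed
  show ?thesis using 1 2 by (simp add: has_lfp_def)
qed

lemma least_fp_eq:
  assumes anti: "\<And>x y. le x y \<Longrightarrow> le y x \<Longrightarrow> x = y" and refl: "\<And>x. le x x"
    and h: "has_lfp le f m"
  shows "least_fp le f = m"
  unfolding least_fp_def
proof (rule the_equality)
  show "is_least_fp le f m" using h refl by (auto simp: has_lfp_def is_least_fp_def)
  fix x assume "is_least_fp le f x"
  thus "x = m" using h refl anti by (auto simp: has_lfp_def is_least_fp_def)
qed

definition enc_t :: "('a \<Rightarrow> four) \<Rightarrow> (bool \<times> 'a \<Rightarrow> bool)" where
  "enc_t v = (\<lambda>(b,A). if b then tr (v A) else \<not> fa (v A))"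
definition dec_t :: "(bool \<times> 'a \<Rightarrow> bool) \<Rightarrow> ('a \<Rightarrow> four)" where
  "dec_t g = (\<lambda>A. mk (g (True,A)) (\<not> g (False,A)))"
definition enc_k :: "('a \<Rightarrow> four) \<Rightarrow> (bool \<times> 'a \<Rightarrow> bool)" where
  "enc_k v = (\<lambda>(b,A). if b then tr (v A) else fa (v A))"
definition dec_k :: "(bool \<times> 'a \<Rightarrow> bool) \<Rightarrow> ('a \<Rightarrow> four)" where
  "dec_k g = (\<lambda>A. mk (g (True,A)) (g (False,A)))"

lemma lfp_tv_exists:
  assumes "\<And>x y. le_tv x y \<Longrightarrow> le_tv (f x) (f y)"
  shows "\<exists>m. has_lfp le_tv f m"
proof -
  have le: "le_tv x y \<longleftrightarrow> enc_t x \<le> enc_t y" for x y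
    by (auto simp: le_tv_def le_t_iff enc_t_def le_fun_def)
  have de: "dec_t (enc_t x) = x" for x by (simp add: enc_t_def dec_t_def)
  have ed: "enc_t (dec_t g) = g" for g
  proof (rule ext)
    fix z show "enc_t (dec_t g) z = g z"
    proof (cases z)
      case (Pair b A) thus ?thesis by (cases b) (simp_all add: enc_t_def dec_t_def)
    qed
  qed
  show ?thesis using gen_lfp[of le_tv enc_t dec_t f, OF le de ed assms] by blast
qed

lemma lfp_kv_exists:
  assumes "\<And>x y. le_kv x y \<Longrightarrow> le_kv (f x) (f y)"
  shows "\<exists>m. has_lfp le_kv f m"
proof -
  have le: "le_kv x y \<longleftrightarrow> enc_k x \<le> enc_k y" for x y
    by (auto simp: le_kv_def le_k_iff enc_k_def le_fun_def)
  have de: "dec_k (enc_k x) = x" for x by (simp add: enc_k_def dec_k_def)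
  have ed: "enc_k (dec_k g) = g" for g
  proof (rule ext)
    fix z show "enc_k (dec_k g) z = g z"
    proof (cases z)
      case (Pair b A) thus ?thesis by (cases b) (simp_all add: enc_k_def dec_k_def)
    qed
  qed
  show ?thesis using gen_lfp[of le_kv enc_k dec_k f, OF le de ed assms] by blast
qed

lemma least_fp_tv: "has_lfp le_tv f m \<Longrightarrow> least_fp le_tv f = m"
  by (rule least_fp_eq) (auto intro: le_tv_antisym le_tv_refl)
lemma least_fp_kv: "has_lfp le_kv f m \<Longrightarrow> least_fp le_kv f = m"
  by (rule least_fp_eq) (auto intro: le_kv_antisym le_kv_refl)

section \<open>Evaluation\<close>

lemma teval_cong: "(\<forall>x\<in>tvars t. \<sigma> x = \<sigma>' x) \<Longrightarrow> teval \<sigma> t = teval \<sigma>' t"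
  by (induction t) auto

lemma evalg_cong: "(\<forall>x\<in>fv \<phi>. \<sigma> x = \<sigma>' x) \<Longrightarrow> evalg p n \<sigma> \<phi> = evalg p n \<sigma>' \<phi>"
proof (induction \<phi> arbitrary: \<sigma> \<sigma>')
  case (Lit b q ts)
  have "\<forall>t\<in>set ts. teval \<sigma> t = teval \<sigma>' t"
  proof
    fix t assume "t \<in> set ts"
    hence "\<forall>x\<in>tvars t. \<sigma> x = \<sigma>' x" using Lit.prems by auto
    thus "teval \<sigma> t = teval \<sigma>' t" by (rule teval_cong)
  qed
  hence "map (teval \<sigma>) ts = map (teval \<sigma>') ts" by simp
  thus ?case by (simp only: evalg.simps)
next
  case (Eq b s t)
  have "teval \<sigma> s = teval \<sigma>' s" by (rule teval_cong) (use Eq.prems in auto)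
  moreover have "teval \<sigma> t = teval \<sigma>' t" by (rule teval_cong) (use Eq.prems in auto)
  ultimately show ?case by (simp only: evalg.simps)
next
  case (Cst c) show ?case by simp
next
  case (And a b)
  have "evalg p n \<sigma> a = evalg p n \<sigma>' a" by (rule And.IH(1)) (use And.prems in auto)
  moreover have "evalg p n \<sigma> b = evalg p n \<sigma>' b" by (rule And.IH(2)) (use And.prems in auto)
  ultimately show ?case by (simp only: evalg.simps)
next
  case (Or a b)
  have "evalg p n \<sigma> a = evalg p n \<sigma>' a" by (rule Or.IH(1)) (use Or.prems in auto)
  moreover have "evalg p n \<sigma> b = evalg p n \<sigma>' b" by (rule Or.IH(2)) (use Or.prems in auto)
  ultimately show ?case by (simp only: evalg.simps)
next
  case (Otimes a b)
  have "evalg p n \<sigma> a = evalg p n \<sigma>' a" by (rule Otimes.IH(1)) (use Otimes.prems in auto)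
  moreover have "evalg p n \<sigma> b = evalg p n \<sigma>' b" by (rule Otimes.IH(2)) (use Otimes.prems in auto)
  ultimately show ?case by (simp only: evalg.simps)
next
  case (Oplus a b)
  have "evalg p n \<sigma> a = evalg p n \<sigma>' a" by (rule Oplus.IH(1)) (use Oplus.prems in auto)
  moreover have "evalg p n \<sigma> b = evalg p n \<sigma>' b" by (rule Oplus.IH(2)) (use Oplus.prems in auto)
  ultimately show ?case by (simp only: evalg.simps)
next
  case (Ex x a)
  have "\<And>t. evalg p n (\<sigma>(x:=t)) a = evalg p n (\<sigma>'(x:=t)) a" by (rule Ex.IH) (use Ex.prems in auto)
  thus ?case by (simp only: evalg.simps)
next
  case (All x a)
  have "\<And>t. evalg p n (\<sigma>(x:=t)) a = evalg p n (\<sigma>'(x:=t)) a" by (rule All.IH) (use All.prems in auto)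
  thus ?case by (simp only: evalg.simps)
qed

lemma evalg_tr:
  "(\<forall>A. tr (p A) \<longrightarrow> tr (p' A)) \<Longrightarrow> (\<forall>A. tr (n A) \<longrightarrow> tr (n' A)) \<Longrightarrow>
   tr (evalg p n \<sigma> \<phi>) \<Longrightarrow> tr (evalg p' n' \<sigma> \<phi>)"
  apply (induction \<phi> arbitrary: \<sigma>)
  apply (auto simp: and4_def or4_def otimes4_def oplus4_def Let_def)
  apply blast+
  done

lemma evalg_fa:
  "(\<forall>A. fa (p A) \<longrightarrow> fa (p' A)) \<Longrightarrow> (\<forall>A. fa (n A) \<longrightarrow> fa (n' A)) \<Longrightarrow>
   fa (evalg p n \<sigma> \<phi>) \<Longrightarrow> fa (evalg p' n' \<sigma> \<phi>)"
  apply (induction \<phi> arbitrary: \<sigma>)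
  apply (auto simp: and4_def or4_def otimes4_def oplus4_def Let_def)
  apply blast+
  done

lemma evalg_three:
  "conventional_fm \<phi> \<Longrightarrow> (\<forall>A. \<not> (tr (p A) \<and> fa (p A))) \<Longrightarrow> (\<forall>A. \<not> (tr (n A) \<and> fa (n A))) \<Longrightarrow>
   \<not> (tr (evalg p n \<sigma> \<phi>) \<and> fa (evalg p n \<sigma> \<phi>))"
proof (induction \<phi> arbitrary: \<sigma>)
  case (Ex x a)
  show ?case
  proof
    assume h: "tr (evalg p n \<sigma> (Ex x a)) \<and> fa (evalg p n \<sigma> (Ex x a))"
    then obtain t where "tr (evalg p n (\<sigma>(x:=t)) a)" by auto
    moreover have "fa (evalg p n (\<sigma>(x:=t)) a)" using h by auto
    moreover have "conventional_fm a" using Ex.prems(1) by simp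
    ultimately show False using Ex.IH[of "\<sigma>(x:=t)"] Ex.prems(2,3) by blast
  qed
next
  case (And a b)
  have "\<not> (tr (evalg p n \<sigma> a) \<and> fa (evalg p n \<sigma> a))" "\<not> (tr (evalg p n \<sigma> b) \<and> fa (evalg p n \<sigma> b))"
    using And by simp_all
  thus ?case by (auto simp: and4_def)
next
  case (Or a b)
  have "\<not> (tr (evalg p n \<sigma> a) \<and> fa (evalg p n \<sigma> a))" "\<not> (tr (evalg p n \<sigma> b) \<and> fa (evalg p n \<sigma> b))"
    using Or by simp_all
  thus ?case by (auto simp: or4_def)
next
  case (Lit b q ts) show ?case using Lit.prems(2,3) by (cases b) simp_all
next
  case (Eq b s t) show ?case by (cases "teval \<sigma> s = teval \<sigma> t"; cases b) (simp_all add: Let_def)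
next
  case (Cst c) thus ?case using Cst.prems(1) by (cases c) simp_all
next
  case (Otimes a b) from Otimes.prems(1) show ?case by simp
next
  case (Oplus a b) from Oplus.prems(1) show ?case by simp
next
  case (All x a) from All.prems(1) show ?case by simp
qed

section \<open>Program instances\<close>

lemma inst_unique:
  assumes fp: "fitting_program P" and h1: "(A,\<phi>,\<sigma>) \<in> inst P" and h2: "(A,\<phi>',\<sigma>') \<in> inst P"
  shows "\<phi>' = \<phi> \<and> (\<forall>x\<in>fv \<phi>. \<sigma> x = \<sigma>' x)"
proof -
  obtain p xs where c1: "(p,xs,\<phi>) \<in> P" "A = (p, map \<sigma> xs)" using h1 by (auto simp: inst_def)
  obtain p' xs' where c2: "(p',xs',\<phi>') \<in> P" "A = (p', map \<sigma>' xs')" using h2 by (auto simp: inst_def)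
  have "p' = p" using c1 c2 by simp
  hence eq: "(p,xs,\<phi>) = (p',xs',\<phi>')" using fp c1(1) c2(1) unfolding fitting_program_def by force
  hence "map \<sigma> xs = map \<sigma>' xs" using c1 c2 by simp
  hence "\<forall>x\<in>set xs. \<sigma> x = \<sigma>' x" by simp
  moreover have "fv \<phi> \<subseteq> set xs" using fp c1(1) unfolding fitting_program_def by fast
  ultimately show ?thesis using eq by auto
qed

lemma evalg_inst_eq:
  assumes "fitting_program P" "(A,\<phi>,\<sigma>) \<in> inst P" "(A,\<phi>',\<sigma>') \<in> inst P"
  shows "evalg p n \<sigma>' \<phi>' = evalg p n \<sigma> \<phi>"
proof -
  from inst_unique[OF assms] have "\<phi>' = \<phi>" "\<forall>x\<in>fv \<phi>. \<sigma> x = \<sigma>' x" by auto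
  thus ?thesis using evalg_cong[of \<phi> \<sigma> \<sigma>' p n] by simp
qed

lemma Psi_inst:
  assumes fp: "fitting_program P" and h: "(A,\<phi>,\<sigma>) \<in> inst P"
  shows "Psi P \<alpha> v w A = contrajoin v w \<sigma> \<phi>"
proof -
  have "(THE b. \<exists>\<phi> \<sigma>. (A, \<phi>, \<sigma>) \<in> inst P \<and> b = contrajoin v w \<sigma> \<phi>) = contrajoin v w \<sigma> \<phi>"
  proof (rule the_equality)
    show "\<exists>\<phi>' \<sigma>'. (A, \<phi>', \<sigma>') \<in> inst P \<and> contrajoin v w \<sigma> \<phi> = contrajoin v w \<sigma>' \<phi>'"
      using h by blast
    fix b assume "\<exists>\<phi>' \<sigma>'. (A, \<phi>', \<sigma>') \<in> inst P \<and> b = contrajoin v w \<sigma>' \<phi>'"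
    then obtain \<phi>' \<sigma>' where "(A, \<phi>', \<sigma>') \<in> inst P" "b = contrajoin v w \<sigma>' \<phi>'" by blast
    thus "b = contrajoin v w \<sigma> \<phi>" using evalg_inst_eq[OF fp h] by (simp add: contrajoin_def)
  qed
  thus ?thesis using h by (auto simp: Psi_def)
qed

lemma Psi_noinst: "\<not> (\<exists>\<phi> \<sigma>. (A,\<phi>,\<sigma>) \<in> inst P) \<Longrightarrow> Psi P \<alpha> v w A = \<alpha>"
  by (simp add: Psi_def)

lemma Psi_tr:
  assumes fp: "fitting_program P" and "\<forall>B. tr (x B) \<longrightarrow> tr (x' B)" "\<forall>B. fa (w B) \<longrightarrow> fa (w' B)"
    and "tr (Psi P \<alpha> x w A)"
  shows "tr (Psi P \<alpha> x' w' A)"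
proof (cases "\<exists>\<phi> \<sigma>. (A,\<phi>,\<sigma>) \<in> inst P")
  case True
  then obtain \<phi> \<sigma> where h: "(A,\<phi>,\<sigma>) \<in> inst P" by blast
  show ?thesis using assms evalg_tr[of x x' "\<lambda>B. neg4 (w B)" "\<lambda>B. neg4 (w' B)" \<sigma> \<phi>]
    by (simp add: Psi_inst[OF fp h] contrajoin_def)
next
  case False thus ?thesis using assms by (simp add: Psi_noinst)
qed

lemma Psi_fa:
  assumes fp: "fitting_program P" and "\<forall>B. fa (x B) \<longrightarrow> fa (x' B)" "\<forall>B. tr (w B) \<longrightarrow> tr (w' B)"
    and "fa (Psi P \<alpha> x w A)"
  shows "fa (Psi P \<alpha> x' w' A)"
proof (cases "\<exists>\<phi> \<sigma>. (A,\<phi>,\<sigma>) \<in> inst P")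
  case True
  then obtain \<phi> \<sigma> where h: "(A,\<phi>,\<sigma>) \<in> inst P" by blast
  show ?thesis using assms evalg_fa[of x x' "\<lambda>B. neg4 (w B)" "\<lambda>B. neg4 (w' B)" \<sigma> \<phi>]
    by (simp add: Psi_inst[OF fp h] contrajoin_def)
next
  case False thus ?thesis using assms by (simp add: Psi_noinst)
qed

lemma Psi_mono_k:
  assumes fp: "fitting_program P" and "le_kv x x'" "le_kv w w'"
  shows "le_kv (Psi P \<alpha> x w) (Psi P \<alpha> x' w')"
  using assms Psi_tr[OF fp, of x x' w w' \<alpha>] Psi_fa[OF fp, of x x' w w' \<alpha>]
  by (auto simp: le_kv_def le_k_iff)

lemma Psi_mono_t:
  assumes fp: "fitting_program P" and "le_tv x x'"
  shows "le_tv (Psi P \<alpha> x w) (Psi P \<alpha> x' w)"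
  using assms Psi_tr[OF fp, of x x' w w \<alpha>] Psi_fa[OF fp, of x' x w w \<alpha>]
  by (auto simp: le_tv_def le_t_iff)

lemma PsiF'_lfp:
  assumes fp: "fitting_program P"
  shows "has_lfp le_tv (\<lambda>x. Psi P FF x w) (PsiF' P w)"
proof -
  obtain m where m: "has_lfp le_tv (\<lambda>x. Psi P FF x w) m"
    using lfp_tv_exists[of "\<lambda>x. Psi P FF x w"] Psi_mono_t[OF fp] by blast
  thus ?thesis unfolding PsiF'_def using least_fp_tv[OF m] by simp
qed

lemma PsiU'_lfp:
  assumes fp: "fitting_program P"
  shows "has_lfp le_kv (\<lambda>x. Psi P UU x w) (PsiU' P w)"
proof -
  obtain m where m: "has_lfp le_kv (\<lambda>x. Psi P UU x w) m"
    using lfp_kv_exists[of "\<lambda>x. Psi P UU x w"] Psi_mono_k[OF fp _ le_kv_refl] by blast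
  thus ?thesis unfolding PsiU'_def using least_fp_kv[OF m] by simp
qed

lemma PsiU'_mono:
  assumes fp: "fitting_program P" and le: "le_kv w1 w2"
  shows "le_kv (PsiU' P w1) (PsiU' P w2)"
proof -
  let ?L2 = "PsiU' P w2"
  have "le_kv (Psi P UU ?L2 w1) (Psi P UU ?L2 w2)" by (rule Psi_mono_k[OF fp le_kv_refl le])
  also have "Psi P UU ?L2 w2 = ?L2" using PsiU'_lfp[OF fp, of w2] by (simp add: has_lfp_def)
  finally have "le_kv (Psi P UU ?L2 w1) ?L2" .
  thus ?thesis using PsiU'_lfp[OF fp, of w1] by (simp add: has_lfp_def)
qed

lemma PsiF'_mono:
  assumes fp: "fitting_program P" and le: "le_kv w1 w2"
  shows "le_kv (PsiF' P w1) (PsiF' P w2)"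
proof -
  define L1 where "L1 = PsiF' P w1"
  define L2 where "L2 = PsiF' P w2"
  have f1: "Psi P FF L1 w1 = L1" and l1: "\<And>y. le_tv (Psi P FF y w1) y \<Longrightarrow> le_tv L1 y"
    using PsiF'_lfp[OF fp, of w1] unfolding L1_def has_lfp_def by auto
  have f2: "Psi P FF L2 w2 = L2" and l2: "\<And>y. le_tv (Psi P FF y w2) y \<Longrightarrow> le_tv L2 y"
    using PsiF'_lfp[OF fp, of w2] unfolding L2_def has_lfp_def by auto
  have wtr: "\<forall>B. tr (w1 B) \<longrightarrow> tr (w2 B)" and wfa: "\<forall>B. fa (w1 B) \<longrightarrow> fa (w2 B)"
    using le by (auto simp: le_kv_def le_k_iff)
  have A1: "tr (L1 A) \<longrightarrow> tr (L2 A)" for A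
  proof -
    define y where "y = (\<lambda>A. mk (tr (L1 A) \<and> tr (L2 A)) (fa (L1 A)))"
    have "le_tv (Psi P FF y w1) y"
      unfolding le_tv_def le_t_iff
    proof (intro allI conjI impI)
      fix B assume t: "tr (Psi P FF y w1 B)"
      have "tr (Psi P FF L1 w1 B)" by (rule Psi_tr[OF fp _ _ t]) (auto simp: y_def)
      moreover have "tr (Psi P FF L2 w2 B)" by (rule Psi_tr[OF fp _ _ t]) (use wfa in \<open>auto simp: y_def\<close>)
      ultimately show "tr (y B)" using f1 f2 by (simp add: y_def)
    next
      fix B assume "fa (y B)"
      hence "fa (Psi P FF L1 w1 B)" using f1 by (simp add: y_def)
      thus "fa (Psi P FF y w1 B)" by (rule Psi_fa[OF fp, rotated 2]) (auto simp: y_def)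
    qed
    hence "le_tv L1 y" by (rule l1)
    hence "le_t (L1 A) (y A)" unfolding le_tv_def by blast
    thus ?thesis by (simp add: le_t_iff y_def)
  qed
  have A2: "fa (L1 A) \<longrightarrow> fa (L2 A)" for A
  proof -
    define y where "y = (\<lambda>A. mk (tr (L2 A)) (fa (L1 A) \<or> fa (L2 A)))"
    have "le_tv (Psi P FF y w2) y"
      unfolding le_tv_def le_t_iff
    proof (intro allI conjI impI)
      fix B assume t: "tr (Psi P FF y w2 B)"
      have "tr (Psi P FF L2 w2 B)" by (rule Psi_tr[OF fp _ _ t]) (auto simp: y_def)
      thus "tr (y B)" using f2 by (simp add: y_def)
    next
      fix B assume "fa (y B)"
      hence "fa (L1 B) \<or> fa (L2 B)" by (simp add: y_def)
      thus "fa (Psi P FF y w2 B)"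
      proof
        assume "fa (L1 B)"
        hence "fa (Psi P FF L1 w1 B)" using f1 by simp
        thus ?thesis by (rule Psi_fa[OF fp, rotated 2]) (use wtr in \<open>auto simp: y_def\<close>)
      next
        assume "fa (L2 B)"
        hence "fa (Psi P FF L2 w2 B)" using f2 by simp
        thus ?thesis by (rule Psi_fa[OF fp, rotated 2]) (auto simp: y_def)
      qed
    qed
    hence "le_tv L2 y" by (rule l2)
    hence "le_t (L2 A) (y A)" unfolding le_tv_def by blast
    thus ?thesis by (simp add: le_t_iff y_def)
  qed
  show ?thesis using A1 A2 unfolding L1_def L2_def le_kv_def le_k_iff by blast
qed

lemma Phi_red_eq:
  assumes fp: "fitting_program P"
  shows "Phi_red P w = (\<lambda>u. Psi P FF u w)"
proof (intro ext)
  fix u A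
  show "Phi_red P w u A = Psi P FF u w A"
  proof (cases "\<exists>\<phi> \<sigma>. (A,\<phi>,\<sigma>) \<in> inst P")
    case True
    then obtain \<phi> \<sigma> where h: "(A,\<phi>,\<sigma>) \<in> inst P" by blast
    have "{evalg u (\<lambda>B. neg4 (w B)) \<sigma>' \<phi>' | \<phi>' \<sigma>'. (A, \<phi>', \<sigma>') \<in> inst P}
          = {evalg u (\<lambda>B. neg4 (w B)) \<sigma> \<phi>}"
      using h evalg_inst_eq[OF fp h] by blast
    moreover have "BigOr {b} = b" for b by (simp add: BigOr_def)
    ultimately show ?thesis using True by (simp add: Phi_red_def Psi_inst[OF fp h] contrajoin_def)
  next
    case False thus ?thesis by (simp add: Phi_red_def Psi_noinst)
  qed
qed

lemma GL_eq: "fitting_program P \<Longrightarrow> GL P w = PsiF' P w"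
  by (simp add: GL_def PsiF'_def Phi_red_eq)

lemma three_down: "le_kv x y \<Longrightarrow> three_valued y \<Longrightarrow> three_valued x"
  unfolding three_valued_def le_kv_def le_k_def by (metis four.distinct)

lemma conv_fitting: "conventional_program P \<Longrightarrow> fitting_program P"
  by (simp add: conventional_program_def)

lemma val_three:
  assumes cp: "conventional_program P" and h: "(A,\<phi>,\<sigma>) \<in> inst P" and t: "three_valued x"
  shows "val x \<sigma> \<phi> \<noteq> II"
proof -
  obtain p xs where "(p,xs,\<phi>) \<in> P" using h by (auto simp: inst_def)
  hence c: "conventional_fm \<phi>" using cp unfolding conventional_program_def by fast
  have t': "\<forall>A. \<not> (tr (x A) \<and> fa (x A))" using t by (simp add: three_valued_def II_iff[symmetric])
  have t'': "\<forall>A. \<not> (tr (neg4 (x A)) \<and> fa (neg4 (x A)))" using t' by auto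
  show ?thesis using evalg_three[OF c t' t'', of \<sigma>] by (simp add: val_def II_iff)
qed

lemma Phi_KK_three: "three_valued (Phi_KK P x)"
  by (simp add: three_valued_def Phi_KK_def)

lemma Phi_KK_eq:
  assumes cp: "conventional_program P" and t: "three_valued x"
  shows "Phi_KK P x = Psi P UU x x"
proof (rule ext)
  fix A
  have fp: "fitting_program P" using cp by (rule conv_fitting)
  show "Phi_KK P x A = Psi P UU x x A"
  proof (cases "\<exists>\<phi> \<sigma>. (A,\<phi>,\<sigma>) \<in> inst P")
    case True
    then obtain \<phi> \<sigma> where h: "(A,\<phi>,\<sigma>) \<in> inst P" by blast
    have ps: "Psi P UU x x A = val x \<sigma> \<phi>" by (simp add: Psi_inst[OF fp h] contrajoin_def val_def)
    have all: "\<And>\<phi>' \<sigma>'. (A,\<phi>',\<sigma>') \<in> inst P \<Longrightarrow> val x \<sigma>' \<phi>' = val x \<sigma> \<phi>"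
      using evalg_inst_eq[OF fp h] by (simp add: val_def)
    have "val x \<sigma> \<phi> \<noteq> II" by (rule val_three[OF cp h t])
    then show ?thesis unfolding ps Phi_KK_def using h all
      by (cases "val x \<sigma> \<phi>") auto
  next
    case False thus ?thesis by (simp add: Phi_KK_def Psi_noinst)
  qed
qed

theorem theorem4:
  fixes P :: "('p, 'f) program"
  assumes "conventional_program P"
  shows "(\<forall>v. stable3 P v \<longrightarrow> pessimistic_fixed_model P v)
       \<and> (\<forall>v. well_founded_sem P v \<longrightarrow> v = FixFU P)
       \<and> (\<forall>v. kripke_kleene_sem P v \<longrightarrow> v = FixUU P)"
proof (intro conjI allI impI)
  have cp: "conventional_program P" by fact
  have fp: "fitting_program P" using cp by (rule conv_fitting)
  have st: "stable3 P v \<longleftrightarrow> three_valued v \<and> PsiF' P v = v" for v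
    by (simp add: stable3_def GL_eq[OF fp])
  fix v
  {
    assume "stable3 P v"
    thus "pessimistic_fixed_model P v" by (simp add: st pessimistic_fixed_model_def)
  next
    assume wf: "well_founded_sem P v"
    obtain m where m: "has_lfp le_kv (PsiF' P) m"
      using lfp_kv_exists[of "PsiF' P"] PsiF'_mono[OF fp] by blast
    have vs: "stable3 P v" using wf by (simp add: well_founded_sem_def)
    hence "le_kv (PsiF' P v) v" using st le_kv_refl by simp
    hence mv: "le_kv m v" using m by (simp add: has_lfp_def)
    hence "three_valued m" using vs three_down st by blast
    hence "stable3 P m" using m st by (simp add: has_lfp_def)
    hence "le_kv v m" using wf by (simp add: well_founded_sem_def)
    hence "v = m" using mv le_kv_antisym by blast
    thus "v = FixFU P" unfolding FixFU_def using least_fp_kv[OF m] by simp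
  next
    assume kk: "kripke_kleene_sem P v"
    have vfix: "Phi_KK P v = v" and vleast: "\<And>y. Phi_KK P y = y \<Longrightarrow> le_kv v y"
      using kk by (auto simp: kripke_kleene_sem_def is_least_fp_def)
    obtain k0 where k0: "has_lfp le_kv (\<lambda>x. Psi P UU x x) k0"
      using lfp_kv_exists[of "\<lambda>x. Psi P UU x x"] Psi_mono_k[OF fp] by blast
    have vt: "three_valued v" using vfix Phi_KK_three[of P v] by simp
    have "Psi P UU v v = v" using Phi_KK_eq[OF cp vt] vfix by simp
    hence "le_kv (Psi P UU v v) v" using le_kv_refl by simp
    hence k0v: "le_kv k0 v" using k0 unfolding has_lfp_def by blast
    hence k0t: "three_valued k0" using vt three_down by blast
    have "Phi_KK P k0 = k0" using Phi_KK_eq[OF cp k0t] k0 by (simp add: has_lfp_def)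
    hence "le_kv v k0" by (rule vleast)
    hence vk0: "v = k0" using k0v le_kv_antisym by blast
    obtain m where m: "has_lfp le_kv (PsiU' P) m"
      using lfp_kv_exists[of "PsiU' P"] PsiU'_mono[OF fp] by blast
    have "le_kv (Psi P UU k0 k0) k0" using k0 le_kv_refl by (simp add: has_lfp_def)
    hence "le_kv (PsiU' P k0) k0" using PsiU'_lfp[OF fp, of k0] by (simp add: has_lfp_def)
    hence mk: "le_kv m k0" using m by (simp add: has_lfp_def)
    have "Psi P UU (PsiU' P m) m = PsiU' P m" using PsiU'_lfp[OF fp, of m] by (simp add: has_lfp_def)
    hence "Psi P UU m m = m" using m by (simp add: has_lfp_def)
    hence "le_kv (Psi P UU m m) m" using le_kv_refl by simp
    hence "le_kv k0 m" using k0 unfolding has_lfp_def by blast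
    hence "m = k0" using mk le_kv_antisym by blast
    thus "v = FixUU P" unfolding FixUU_def using least_fp_kv[OF m] vk0 by simp
  }
qed

end
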